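(* For all $0\le t<1$, $$\lim_{x\downarrow C^*\sqrt{1-t}}\frac{\partial}{\partial x}V^*(t,x)=\lim_{x\uparrow C^*\sqrt{1-t}}\frac{\partial}{\partial x}f(t,x),$$ where $$V^*(t,x)=\begin{cases}\sqrt{1-t}\,\sqrt{2\pi}\,\Phi(-x/\sqrt{1-t})e^{x^2/(2(1-t))}v(C^* ), & x>C^*\sqrt{1-t},\\ f(t,x), & x\le C^*\sqrt{1-t}.\end{cases}$$
   Context: $\Phi$ is the standard normal distribution function. $B^*\approx0.84$ is the unique positive solution of $\sqrt{2\pi}(1-B^2)e^{B^2/2}\Phi(B)=B$. Define $U(t,x)=\sqrt{2\pi(1-t)}(1-(B^* )^2)e^{x^2/(2(1-t))}\Phi(x/\sqrt{1-t})$ for $x<B^*\sqrt{1-t}$, and $U(t,x)=x$ otherwise. Set $f(t,x)=U(t,x)-x$. For $C\le B^*$ let $v(C)=\frac{1}{\Phi(-C)}[(1-(B^* )^2)\Phi(C)-Ce^{-C^2/2}/\sqrt{2\pi}]$ and $u(C)=1-(B^* )^2-(1-C^2)\Phi(-C)-\frac{C}{\sqrt{2\pi}}e^{-C^2/2}$. $C^*$ is the unique negative zero of $u$. *)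

theory Defs
  imports "HOL-Probability.Probability"
begin

definition Phi :: "real \<Rightarrow> real" where
  "Phi x = (LBINT y:{..x}. std_normal_density y)"

definition B_star :: real where
  "B_star = (THE B. B > 0 \<and> sqrt (2*pi) * (1 - B\<^sup>2) * exp (B\<^sup>2/2) * Phi B = B)"

definition U :: "real \<Rightarrow> real \<Rightarrow> real" where
  "U t x = (if x < B_star * sqrt (1 - t)
            then sqrt (2*pi*(1-t)) * (1 - B_star\<^sup>2) * exp (x\<^sup>2 / (2*(1-t))) * Phi (x / sqrt (1-t))
            else x)"

definition f :: "real \<Rightarrow> real \<Rightarrow> real" where
  "f t x = U t x - x"

definition v :: "real \<Rightarrow> real" where
  "v C = (1 / Phi (-C)) * ((1 - B_star\<^sup>2) * Phi C - C * exp (-(C\<^sup>2)/2) / sqrt (2*pi))"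

definition u :: "real \<Rightarrow> real" where
  "u C = 1 - B_star\<^sup>2 - (1 - C\<^sup>2) * Phi (-C) - C / sqrt (2*pi) * exp (-(C\<^sup>2)/2)"

definition C_star :: real where
  "C_star = (THE C. C < 0 \<and> u C = 0)"

definition V_star :: "real \<Rightarrow> real \<Rightarrow> real" where
  "V_star t x = (if x > C_star * sqrt (1 - t)
     then sqrt (1-t) * sqrt (2*pi) * Phi (-x / sqrt (1-t)) * exp (x\<^sup>2 / (2*(1-t))) * v C_star
     else f t x)"

end

theory Submission
  imports Defs
begin


lemma std_int: "interval_lebesgue_integrable lborel a b std_normal_density"
  unfolding interval_lebesgue_integrable_def set_integrable_def
  using integrable_mult_indicator[of "einterval a b" lborel std_normal_density] integrable_mult_indicator[of "einterval b a" lborel std_normal_density] by simp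

lemma Phi_interval: "Phi x = (LBINT y=-\<infinity>..ereal x. std_normal_density y)"
proof -
  have "(LBINT y=-\<infinity>..ereal x. std_normal_density y) = (LBINT y:{..<x}. std_normal_density y)"
    by (simp add: interval_lebesgue_integral_def einterval_def lessThan_def)
  also have "\<dots> = Phi x" unfolding Phi_def
    by (rule set_integral_discrete_difference[where X="{x}"]) auto
  finally show ?thesis by simp
qed

lemma Phi_split: "Phi x = Phi 0 + (LBINT y=0..ereal x. std_normal_density y)"
  unfolding Phi_interval zero_ereal_def
  by (rule interval_integral_sum[symmetric], rule std_int)

lemma Phi_deriv: "(Phi has_real_derivative std_normal_density x) (at x)"
proof -
  let ?a = "min 0 x - 1" and ?b = "max 0 x + 1"
  have "((\<lambda>u. LBINT y=ereal 0..u. std_normal_density y) has_vector_derivative std_normal_density x) (at x within {?a..?b})"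
    by (rule interval_integral_FTC2) (auto intro!: continuous_intros simp: std_normal_density_def)
  hence "((\<lambda>u. LBINT y=ereal 0..u. std_normal_density y) has_vector_derivative std_normal_density x) (at x)"
    by (subst (asm) at_within_interior[where x=x]) auto
  hence "((\<lambda>u. Phi 0 + (LBINT y=ereal 0..u. std_normal_density y)) has_real_derivative std_normal_density x) (at x)"
    by (auto intro!: derivative_eq_intros simp: has_real_derivative_iff_has_vector_derivative)
  moreover have "Phi = (\<lambda>u. Phi 0 + (LBINT y=ereal 0..u. std_normal_density y))"
    by (rule ext, subst Phi_split, simp add: zero_ereal_def)
  ultimately show ?thesis by simp
qed

lemma snd_sym: "std_normal_density (-y) = std_normal_density y"
  by (simp add: std_normal_density_def)

lemma Phi_sym: "Phi x + Phi (-x) = 1"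
proof -
  have "Phi (-x) = (LBINT y=ereal x..\<infinity>. std_normal_density y)"
    unfolding Phi_interval by (subst interval_integral_reflect) (simp only: snd_sym ereal_uminus_uminus uminus_ereal.simps)
  hence "Phi x + Phi (-x) = (LBINT y=-\<infinity>..\<infinity>. std_normal_density y)"
    unfolding Phi_interval by (simp add: interval_integral_sum std_int)
  also have "\<dots> = 1"
    by (simp add: interval_lebesgue_integral_def einterval_def set_lebesgue_integral_def)
  finally show ?thesis .
qed

lemma Phi_nonneg: "0 \<le> Phi x"
  unfolding Phi_def set_lebesgue_integral_def by (auto intro!: integral_nonneg_AE)

lemma Phi_le1: "Phi x \<le> 1" using Phi_sym[of x] Phi_nonneg[of "-x"] by linarith
lemma Phi0: "Phi 0 = 1/2" using Phi_sym[of 0] by simp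



abbreviation "phi \<equiv> std_normal_density"

lemma phi_deriv: "(phi has_real_derivative (- x * phi x)) (at x)"
  unfolding std_normal_density_def
  by (auto intro!: derivative_eq_intros simp: field_simps)

lemma phi_deriv_chain[derivative_intros]:
  "(g has_real_derivative g') (at x within S) \<Longrightarrow> ((\<lambda>x. phi (g x)) has_real_derivative (- g x * phi (g x)) * g') (at x within S)"
  by (rule DERIV_chain2[OF phi_deriv])

lemma Phi_deriv_chain[derivative_intros]:
  "(g has_real_derivative g') (at x within S) \<Longrightarrow> ((\<lambda>x. Phi (g x)) has_real_derivative phi (g x) * g') (at x within S)"
  by (rule DERIV_chain2[OF Phi_deriv])

lemma Phi_cont: "isCont Phi x" using Phi_deriv DERIV_isCont by blast

lemma phi_le: "phi x \<le> 1/2"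
proof -
  have e: "exp (- x\<^sup>2 / 2) \<le> 1" by simp
  have s: "sqrt (2*pi) \<ge> 2"
    using pi_gt3 by (simp add: real_le_rsqrt)
  have "phi x = exp (- x\<^sup>2 / 2) / sqrt (2*pi)" unfolding std_normal_density_def by simp
  also have "\<dots> \<le> 1 / sqrt (2*pi)" using e by (intro divide_right_mono) auto
  also have "\<dots> \<le> 1/2" using s by (intro divide_left_mono) auto
  finally show ?thesis .
qed

lemma Phi_lower: assumes "0 \<le> x" shows "Phi x \<ge> 1/2 + x * phi x"
proof (cases "x = 0")
  case True thus ?thesis by (simp add: Phi0)
next
  case False
  let ?h = "\<lambda>x. Phi x - x * phi x"
  have d: "\<And>y. (?h has_real_derivative y\<^sup>2 * phi y) (at y)"
    by (auto intro!: derivative_eq_intros simp: power2_eq_square algebra_simps)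
  obtain z where "?h x - ?h 0 = (x - 0) * (z\<^sup>2 * phi z)"
    using MVT2[of 0 x ?h "\<lambda>y. y\<^sup>2 * phi y"] d False assms by (metis less_eq_real_def)
  moreover have "(x - 0) * (z\<^sup>2 * phi z) \<ge> 0" using assms by simp
  ultimately show ?thesis by (simp add: Phi0)
qed

definition mB :: "real \<Rightarrow> real" where "mB B = (1 - B\<^sup>2) * Phi B - B * phi B"

lemma mB_deriv: "(mB has_real_derivative (-2 * B * Phi B)) (at B)"
  unfolding mB_def
  by (auto intro!: derivative_eq_intros simp: power2_eq_square algebra_simps)


lemma mB_strict: assumes "0 \<le> x" "x < y" shows "mB y < mB x"
proof -
  obtain z where z: "z > x" "z < y" "mB y - mB x = (y - x) * (-2 * z * Phi z)"
    using MVT2[of x y mB "\<lambda>B. -2 * B * Phi B"] mB_deriv assms by blast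
  have "z * phi z \<ge> 0" using z assms by simp
  hence "Phi z \<ge> 1/2" using Phi_lower[of z] z assms by linarith
  hence "0 < (y - x) * (z * Phi z)" using z assms
    by (intro mult_pos_pos) auto
  hence "(y - x) * (-2 * z * Phi z) < 0" by (simp add: algebra_simps)
  thus ?thesis using z(3) by linarith
qed

lemma eqB_iff: "(sqrt (2*pi) * (1 - B\<^sup>2) * exp (B\<^sup>2/2) * Phi B = B) \<longleftrightarrow> mB B = 0"
proof -
  have k: "sqrt (2*pi) * exp (B\<^sup>2/2) * phi B = 1"
    unfolding std_normal_density_def by (simp add: exp_minus field_simps)
  have "sqrt (2*pi) * (1 - B\<^sup>2) * exp (B\<^sup>2/2) * Phi B - B = sqrt (2*pi) * exp (B\<^sup>2/2) * mB B"
    unfolding mB_def using k by (simp add: algebra_simps)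
  moreover have "sqrt (2*pi) * exp (B\<^sup>2/2) > 0" by simp
  ultimately show ?thesis by (smt (verit) mult_eq_0_iff)
qed

lemma B_star_props: "B_star > 0 \<and> mB B_star = 0 \<and> B_star\<^sup>2 > 1/2 \<and> B_star \<le> 1"
proof -
  define r :: real where "r = 71/100"
  have r01: "0 < r" "r < 1" by (auto simp: r_def)
  have m1: "mB 1 < 0" unfolding mB_def using normal_density_pos[of 1 0 1] by simp
  have mr: "mB r > 0"
  proof -
    have P: "Phi r \<ge> 1/2 + r * phi r" using Phi_lower[of r] r01 by simp
    have "1 - r\<^sup>2 \<ge> 0" by (simp add: r_def power2_eq_square)
    hence "(1 - r\<^sup>2) * Phi r \<ge> (1 - r\<^sup>2) * (1/2 + r * phi r)"
      using P by (intro mult_left_mono)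
    hence "mB r \<ge> (1 - r\<^sup>2) * (1/2 + r * phi r) - r * phi r" unfolding mB_def by linarith
    moreover have "(1 - r\<^sup>2) * (1/2 + r * phi r) - r * phi r = (1 - r\<^sup>2)/2 - r^3 * phi r"
      by (simp add: algebra_simps power2_eq_square power3_eq_cube)
    moreover have "r^3 * phi r \<le> r^3 * (1/2)" using phi_le r01 by (intro mult_left_mono) auto
    moreover have "(1 - r\<^sup>2)/2 - r^3 * (1/2) > 0" by (simp add: r_def power3_eq_cube power2_eq_square)
    ultimately show ?thesis by linarith
  qed
  have cont: "\<forall>x. r \<le> x \<and> x \<le> 1 \<longrightarrow> isCont mB x"
    using mB_deriv DERIV_isCont by blast
  obtain B where B: "r \<le> B" "B \<le> 1" "mB B = 0"
    using IVT2[of mB 1 0 r, OF _ _ _ cont] m1 mr r01 by fastforce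
  have Bpos: "B > 0" using B r01 by linarith
  have uniq: "B' = B" if H: "B' > 0 \<and> sqrt (2*pi) * (1 - B'\<^sup>2) * exp (B'\<^sup>2/2) * Phi B' = B'" for B'
  proof -
    have h1: "B' > 0" and h2: "mB B' = 0" using H eqB_iff[of B'] by blast+
    show "B' = B"
    proof (cases B' B rule: linorder_cases)
      case less thus ?thesis using mB_strict[of B' B] h1 h2 B(3) by simp
    next
      case greater thus ?thesis using mB_strict[of B B'] Bpos h2 B(3) by simp
    qed simp
  qed
  have Bprop: "B > 0 \<and> sqrt (2*pi) * (1 - B\<^sup>2) * exp (B\<^sup>2/2) * Phi B = B"
    using Bpos B(3) eqB_iff[of B] by blast
  have "B_star = B" unfolding B_star_def
    by (rule the_equality[where P="\<lambda>B. B > 0 \<and> sqrt (2*pi) * (1 - B\<^sup>2) * exp (B\<^sup>2/2) * Phi B = B", OF Bprop uniq])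
  moreover have "B \<noteq> r" using mr B(3) by auto
  hence "B > r" using B(1) by linarith
  hence "r\<^sup>2 < B\<^sup>2" using power_strict_mono[of r B 2] r01 by simp
  moreover have "r\<^sup>2 > 1/2" by (simp add: r_def power2_eq_square)
  ultimately show ?thesis using B Bpos by simp
qed

definition gC :: "real \<Rightarrow> real" where "gC C = 1 - (1 - C\<^sup>2) * Phi (-C) - C * phi C"

lemma u_gC: "u C = gC C - B_star\<^sup>2"
  unfolding u_def gC_def std_normal_density_def by (simp add: field_simps)

lemma gC_deriv: "(gC has_real_derivative (2 * C * Phi (-C))) (at C)"
  unfolding gC_def
  by (auto intro!: derivative_eq_intros simp: power2_eq_square algebra_simps snd_sym)

lemma gC_strict: assumes "y \<le> 0" "x < y" shows "gC y < gC x"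
proof -
  obtain z where z: "z > x" "z < y" "gC y - gC x = (y - x) * (2 * z * Phi (-z))"
    using MVT2[of x y gC "\<lambda>C. 2 * C * Phi (-C)"] gC_deriv assms by blast
  have "(-z) * phi (-z) \<ge> 0" using z assms by (intro mult_nonneg_nonneg) auto
  hence "Phi (-z) \<ge> 1/2" using Phi_lower[of "-z"] z assms by linarith
  hence "0 < (y - x) * (-z * Phi (-z))" using z assms
    by (intro mult_pos_pos) auto
  hence "(y - x) * (2 * z * Phi (-z)) < 0" by (simp add: algebra_simps)
  thus ?thesis using z(3) by linarith
qed

lemma C_star_props: "C_star < 0 \<and> u C_star = 0"
proof -
  have Bp: "B_star\<^sup>2 > 1/2" "B_star \<le> 1" "B_star > 0" using B_star_props by auto
  have "B_star\<^sup>2 \<le> 1" using Bp power_mono[of B_star 1 2] by simp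
  have u0: "u 0 < 0" unfolding u_gC gC_def using Bp by (simp add: Phi0)
  have "2 * phi 2 \<ge> 0" by simp
  hence "Phi 2 \<ge> 1/2" using Phi_lower[of 2] by linarith
  moreover have "gC (-2) = 1 + 3 * Phi 2 + 2 * phi 2" unfolding gC_def by (simp add: snd_sym)
  moreover have "phi 2 \<ge> 0" by simp
  ultimately have um2: "u (-2) > 0" unfolding u_gC using \<open>B_star\<^sup>2 \<le> 1\<close> by linarith
  have cont: "\<forall>x. -2 \<le> x \<and> x \<le> 0 \<longrightarrow> isCont u x"
  proof (intro allI impI)
    fix x :: real
    have "isCont gC x" using gC_deriv DERIV_isCont by blast
    thus "isCont u x" unfolding u_gC[abs_def] by (intro continuous_intros)
  qed
  obtain C where C: "-2 \<le> C" "C \<le> 0" "u C = 0"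
    using IVT2[of u 0 0 "-2", OF _ _ _ cont] u0 um2 by fastforce
  have Cneg: "C < 0" using C u0 by (cases "C = 0") auto
  have uniq: "C' = C" if H: "C' < 0 \<and> u C' = 0" for C'
  proof (cases C' C rule: linorder_cases)
    case less thus ?thesis using gC_strict[of C C'] H C Cneg unfolding u_gC by simp
  next
    case greater thus ?thesis using gC_strict[of C' C] H C unfolding u_gC by simp
  qed simp
  have Cprop: "C < 0 \<and> u C = 0" using Cneg C by simp
  have "C_star = C" unfolding C_star_def
    by (rule the_equality[where P="\<lambda>C. C < 0 \<and> u C = 0", OF Cprop uniq])
  thus ?thesis using Cneg C by simp
qed



lemma isCont_Phi_comp[continuous_intros]: "isCont g x \<Longrightarrow> isCont (\<lambda>x. Phi (g x)) x"
  by (rule isCont_o2[OF _ Phi_cont])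

lemma isCont_phi_comp[continuous_intros]: "isCont g x \<Longrightarrow> isCont (\<lambda>x. phi (g x)) x"
  by (rule isCont_o2[OF _ DERIV_isCont[OF phi_deriv]])

theorem lemma3p3:
  fixes t :: real
  assumes "0 \<le> t" and "t < 1"
  shows "\<exists>L. ((\<lambda>x. deriv (\<lambda>y. V_star t y) x) \<longlongrightarrow> L) (at_right (C_star * sqrt (1 - t)))
           \<and> ((\<lambda>x. deriv (\<lambda>y. f t y) x) \<longlongrightarrow> L) (at_left (C_star * sqrt (1 - t)))"
proof -
  define s where "s = sqrt (1 - t)"
  define C where "C = C_star"
  define a where "a = C * s"
  define k where "k = 1 - B_star\<^sup>2"
  define vC where "vC = v C_star"
  have s0: "s > 0" using assms by (simp add: s_def)
  have ss: "s * s = 1 - t" using assms by (simp add: s_def)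
  have Cp: "C < 0" "u C = 0" using C_star_props by (auto simp: C_def)
  have Bp: "B_star > 0" using B_star_props by auto
  have a0: "a < 0" using Cp s0 by (simp add: a_def mult_neg_pos)
  define E where "E y = exp (y\<^sup>2 / (2*(1-t)))" for y
  define Vf where "Vf y = s * sqrt (2*pi) * Phi (-y / s) * E y * vC" for y
  define DV where "DV y = s * sqrt (2*pi) * (phi (-y/s) * (-1/s) * E y + Phi (-y/s) * (E y * (y / (1-t)))) * vC" for y
  define Ff where "Ff y = sqrt (2*pi*(1-t)) * k * E y * Phi (y / s) - y" for y
  define DF where "DF y = sqrt (2*pi*(1-t)) * k * (E y * (y/(1-t)) * Phi (y/s) + E y * (phi (y/s) * (1/s))) - 1" for y
  have d0: "((\<lambda>y. y\<^sup>2 * c) has_real_derivative 2*y*c) (at y)" for y c :: real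
    by (auto intro!: derivative_eq_intros)
  have d1: "((\<lambda>y. y\<^sup>2/(2*(1-t))) has_real_derivative y/(1-t)) (at y)" for y
  proof -
    have e: "2*y*(1/(2*(1-t))) = y/(1-t)" using assms by (simp add: field_simps)
    have f: "(\<lambda>y. y\<^sup>2 * (1/(2*(1-t)))) = (\<lambda>y. y\<^sup>2/(2*(1-t)))" by auto
    show ?thesis using d0[where y=y and c="1/(2*(1-t))"] unfolding e f .
  qed
  have dE: "(E has_real_derivative E y * (y/(1-t))) (at y)" for y
    using DERIV_chain2[OF DERIV_exp d1[of y]] unfolding E_def by (simp add: mult.commute)
  have dV: "(Vf has_real_derivative DV y) (at y)" for y
    unfolding Vf_def DV_def using s0
    by (auto intro!: derivative_eq_intros dE simp: field_simps)
  have dF: "(Ff has_real_derivative DF y) (at y)" for y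
    unfolding Ff_def DF_def using s0
    by (auto intro!: derivative_eq_intros dE simp: field_simps)
  have contV: "isCont DV a" unfolding DV_def E_def using s0 assms by (intro continuous_intros) auto
  have contF: "isCont DF a" unfolding DF_def E_def using s0 assms by (intro continuous_intros) auto
  have evR: "eventually (\<lambda>x. x > a) (at_right a)" by (simp add: eventually_at_filter)
  have evL: "eventually (\<lambda>x. x < a) (at_left a)" by (simp add: eventually_at_filter)
  have derV: "deriv (\<lambda>y. V_star t y) x = DV x" if "x > a" for x
  proof (rule DERIV_imp_deriv, rule has_field_derivative_transform_within_open[OF dV, of "{a<..}"])
    show "open {a<..}" by simp
    show "x \<in> {a<..}" using that by simp
    fix y assume "y \<in> {a<..}"
    hence "y > C_star * sqrt (1 - t)" unfolding a_def C_def s_def by simp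
    hence "V_star t y = sqrt (1-t) * sqrt (2*pi) * Phi (-y / sqrt (1-t)) * exp (y\<^sup>2 / (2*(1-t))) * v C_star"
      unfolding V_star_def by (rule if_P)
    thus "Vf y = V_star t y" unfolding Vf_def E_def vC_def s_def by simp
  qed
  have derF: "deriv (\<lambda>y. f t y) x = DF x" if "x < a" for x
  proof (rule DERIV_imp_deriv, rule has_field_derivative_transform_within_open[OF dF, of "{..<a}"])
    show "open {..<a}" by simp
    show "x \<in> {..<a}" using that by simp
    fix y assume "y \<in> {..<a}"
    hence "y < 0" using a0 by simp
    moreover have "0 < B_star * sqrt (1 - t)" using Bp s0 unfolding s_def by simp
    ultimately have "y < B_star * sqrt (1 - t)" by linarith
    hence "U t y = sqrt (2*pi*(1-t)) * (1 - B_star\<^sup>2) * exp (y\<^sup>2 / (2*(1-t))) * Phi (y / sqrt (1-t))"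
      unfolding U_def by (rule if_P)
    thus "Ff y = f t y" unfolding Ff_def f_def E_def k_def s_def by simp
  qed
  have limV: "((\<lambda>x. deriv (\<lambda>y. V_star t y) x) \<longlongrightarrow> DV a) (at_right a)"
  proof -
    have "(DV \<longlongrightarrow> DV a) (at_right a)"
      using contV unfolding isCont_def by (rule tendsto_mono[OF at_le, rotated]) simp
    moreover have "eventually (\<lambda>x. DV x = deriv (\<lambda>y. V_star t y) x) (at_right a)"
      using evR by eventually_elim (simp add: derV)
    ultimately show ?thesis using tendsto_cong by blast
  qed
  have limF: "((\<lambda>x. deriv (\<lambda>y. f t y) x) \<longlongrightarrow> DF a) (at_left a)"
  proof -
    have "(DF \<longlongrightarrow> DF a) (at_left a)"
      using contF unfolding isCont_def by (rule tendsto_mono[OF at_le, rotated]) simp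
    moreover have "eventually (\<lambda>x. DF x = deriv (\<lambda>y. f t y) x) (at_left a)"
      using evL by eventually_elim (simp add: derF)
    ultimately show ?thesis using tendsto_cong by blast
  qed
  define P where "P = Phi (-C)"
  define Q where "Q = Phi C"
  define p where "p = phi C"
  define e where "e = exp (C\<^sup>2/2)"
  define w where "w = sqrt (2*pi) * e"
  have hQ: "Q = 1 - P" using Phi_sym[of C] unfolding P_def Q_def by linarith
  have "(-C) * phi (-C) \<ge> 0" using Cp by (intro mult_nonneg_nonneg) auto
  hence hP: "P > 0" using Phi_lower[of "-C"] Cp unfolding P_def by linarith
  have hw: "w * p = 1" unfolding w_def e_def p_def std_normal_density_def
    by (simp add: exp_minus field_simps)
  have pC: "exp (- (C\<^sup>2) / 2) / sqrt (2 * pi) = p" unfolding p_def std_normal_density_def by simp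
  have e1: "C / sqrt (2*pi) * exp (-(C\<^sup>2)/2) = C * p" unfolding p_def std_normal_density_def by simp
  have e2: "C * exp (-(C\<^sup>2)/2) / sqrt (2*pi) = C * p" unfolding p_def std_normal_density_def by simp
  have hv: "vC * P = k * Q - C * p"
  proof -
    have "vC = (1 / P) * (k * Q - C * p)"
      unfolding vC_def C_def[symmetric] v_def e2 P_def Q_def k_def ..
    thus ?thesis using hP by simp
  qed
  have hu: "k - (1 - C\<^sup>2) * P - C * p = 0"
  proof -
    have "u C = k - (1 - C\<^sup>2) * P - C * p"
      unfolding u_def e1 k_def P_def ..
    thus ?thesis using Cp(2) by simp
  qed
  have vval: "vC = 1 - C\<^sup>2 - k"
  proof -
    have "vC * P = (1 - C\<^sup>2 - k) * P" using hv hu hQ by (simp add: algebra_simps)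
    thus ?thesis using hP by simp
  qed
  have as: "a / s = C" "-a / s = -C" using s0 unfolding a_def by auto
  have aE: "E a = e"
  proof -
    have "E a = exp ((C * s)\<^sup>2 / (2 * (s * s)))" unfolding E_def a_def ss[symmetric] ..
    also have "(C * s)\<^sup>2 / (2 * (s * s)) = C\<^sup>2/2" using s0 by (simp add: power2_eq_square)
    finally show ?thesis unfolding e_def .
  qed
  have at: "a / (1 - t) = C / s" unfolding a_def ss[symmetric] using s0 by simp
  have sq: "sqrt (2*pi*(1-t)) = sqrt (2*pi) * s" unfolding s_def by (simp add: real_sqrt_mult)
  have DVa: "DV a = w * C * (vC * P) - vC * (w * p)"
    unfolding DV_def as aE at w_def p_def P_def using s0 by (simp add: snd_sym field_simps)
  have DFa: "DF a = w * k * C * Q + k * (w * p) - 1"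
    unfolding DF_def as aE at sq w_def p_def Q_def using s0 by (simp add: field_simps)
  have eq: "DV a = DF a"
  proof -
    have "DV a = w * C * (k * Q - C * p) - vC" using DVa hv hw by simp
    also have "\<dots> = w * k * C * Q - C\<^sup>2 * (w * p) - vC" by (simp add: algebra_simps power2_eq_square)
    also have "\<dots> = w * k * C * Q - C\<^sup>2 - vC" using hw by simp
    also have "\<dots> = DF a" using DFa hw vval by simp
    finally show ?thesis .
  qed
  show ?thesis using limV limF eq unfolding a_def C_def s_def by auto
qed


end
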